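(* Let $h>0$ and $f\in H^\omega(X)\cap L_1(X)$. Then \[ \|f\|_{\mathcal B(X)}\le\frac{\|f\|_{H^\omega(X)}}{\mu(B_h)}\int_{B_h}\omega(\rho(u,\theta))\,d\mu(u)+\frac{\|f\|_{L_1(X)}}{\mu(B_h)}. \] The inequality is sharp: it becomes an equality for $f_{e,h}(x)=(\omega(h)-\omega(\rho(x,\theta)))_+$.
   Context: Standing setting: $(X,\rho)$ is a metric space with a Borel measure $\mu$. $X$ is a commutative monoid, i.e. there is an associative and commutative binary operation $+$ on $X$ with a neutral element $\theta$. The measure is translation invariant: $\mu(x+Q)=\mu(Q)$ for every $\mu$-measurable $Q\subset X$ and every $x\in X$; correspondingly $\int_{B_h}g(x+u)\,d\mu(u)=\int_{x+B_h}g(u)\,d\mu(u)$ for locally integrable $g$. Moreover $\rho(x+y,x)\le\rho(y,\theta)$ for all $x,y\in X$. $B_h$ denotes the open ball of radius $h$ centered at $\theta$, and it is assumed that $0<\mu(B_h)<\infty$ and $B_h\neq\{\theta\}$ for every $h>0$. Every continuous real function on $X$ is integrable on every open ball. For a function $f$, $\|f\|_{\mathcal B(X)}=\sup_{x\in X}|f(x)|$; $L_1(X)$ is the space of $\mu$-integrable functions with the usual norm. $\alpha_+=\max\{\alpha,0\}$. A modulus of continuity is a function $\omega\colon[0,\infty)\to[0,\infty)$ that is non-decreasing, semi-additive ($\omega(s+t)\le\omega(s)+\omega(t)$), with $\omega(0)=0$, and not identically zero. $H^\omega(X)$ is the space of $f\colon X\to\mathbb R$ with $\|f\|_{H^\omega(X)}:=\sup_{x\neq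 y}\frac{|f(x)-f(y)|}{\omega(\rho(x,y))}<\infty$. *)

theory Defs
  imports "HOL-Analysis.Analysis"
begin

text \<open>Standing setting: X is a type that is both a metric space (rho = dist) and a
  commutative monoid (+, neutral element theta = 0); M is a Borel measure on X.\<close>

definition standing_setting :: "'a::{metric_space,comm_monoid_add} measure \<Rightarrow> bool" where
  "standing_setting M \<longleftrightarrow>
     sets M = sets borel \<and>
     (\<forall>Q\<in>sets M. \<forall>x. (\<lambda>u. x + u) ` Q \<in> sets M \<and>
                       emeasure M ((\<lambda>u. x + u) ` Q) = emeasure M Q) \<and>
     (\<forall>(g::'a \<Rightarrow> real) x h. h > 0 \<longrightarrow> (\<forall>y r. set_integrable M (ball y r) g) \<longrightarrow>
         set_integrable M (ball 0 h) (\<lambda>u. g (x + u)) \<and>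
         (LINT u:ball 0 h|M. g (x + u)) = (LINT u:((\<lambda>v. x + v) ` ball 0 h)|M. g u)) \<and>
     (\<forall>x y::'a. dist (x + y) x \<le> dist y 0) \<and>
     (\<forall>h::real. h > 0 \<longrightarrow> 0 < emeasure M (ball 0 h) \<and> emeasure M (ball 0 h) < \<infinity> \<and> ball (0::'a) h \<noteq> {0}) \<and>
     (\<forall>g::'a \<Rightarrow> real. continuous_on UNIV g \<longrightarrow> (\<forall>(y::'a) (r::real). set_integrable M (ball y r) g))"

definition modulus_of_continuity :: "(real \<Rightarrow> real) \<Rightarrow> bool" where
  "modulus_of_continuity \<omega> \<longleftrightarrow>
     (\<forall>t\<ge>0. \<omega> t \<ge> 0) \<and> mono_on {0..} \<omega> \<and>
     (\<forall>s\<ge>0. \<forall>t\<ge>0. \<omega> (s + t) \<le> \<omega> s + \<omega> t) \<and>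
     \<omega> 0 = 0 \<and> (\<exists>t\<ge>0. \<omega> t \<noteq> 0)"

definition H_omega_quot :: "(real \<Rightarrow> real) \<Rightarrow> ('a::metric_space \<Rightarrow> real) \<Rightarrow> 'a \<times> 'a \<Rightarrow> real" where
  "H_omega_quot \<omega> f = (\<lambda>(x, y). \<bar>f x - f y\<bar> / \<omega> (dist x y))"

definition in_H_omega :: "(real \<Rightarrow> real) \<Rightarrow> ('a::metric_space \<Rightarrow> real) \<Rightarrow> bool" where
  "in_H_omega \<omega> f \<longleftrightarrow> bdd_above (H_omega_quot \<omega> f ` {(x, y). x \<noteq> y})"

definition H_omega_norm :: "(real \<Rightarrow> real) \<Rightarrow> ('a::metric_space \<Rightarrow> real) \<Rightarrow> real" where
  "H_omega_norm \<omega> f = (SUP p \<in> {(x, y). x \<noteq> y}. H_omega_quot \<omega> f p)"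

definition sup_norm :: "('a \<Rightarrow> real) \<Rightarrow> real" where
  "sup_norm f = (SUP x. \<bar>f x\<bar>)"

definition L1_norm :: "'a measure \<Rightarrow> ('a \<Rightarrow> real) \<Rightarrow> real" where
  "L1_norm M f = (\<integral>x. \<bar>f x\<bar> \<partial>M)"

end

theory Submission
  imports Defs
begin

lemma omega_pos:
  assumes "modulus_of_continuity \<omega>" "t > 0"
  shows "\<omega> t > 0"
proof -
  from assms(1) have nn: "\<And>t. t \<ge> 0 \<Longrightarrow> \<omega> t \<ge> 0" and mo: "mono_on {0..} \<omega>"
    and sa: "\<And>s t. s \<ge> 0 \<Longrightarrow> t \<ge> 0 \<Longrightarrow> \<omega> (s + t) \<le> \<omega> s + \<omega> t"
    and z: "\<omega> 0 = 0" and ex: "\<exists>t\<ge>0. \<omega> t \<noteq> 0"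
    unfolding modulus_of_continuity_def by auto
  show ?thesis
  proof (rule ccontr)
    assume "\<not> \<omega> t > 0"
    with nn[of t] assms(2) have wt: "\<omega> t = 0" by linarith
    have ind: "\<omega> (real n * t) \<le> 0" for n
    proof (induction n)
      case 0 then show ?case using z by simp
    next
      case (Suc n)
      have "\<omega> (real (Suc n) * t) = \<omega> (real n * t + t)" by (simp add: algebra_simps)
      also have "\<dots> \<le> \<omega> (real n * t) + \<omega> t" using sa assms(2) by simp
      finally show ?case using Suc wt by simp
    qed
    obtain t0 where t0: "t0 \<ge> 0" "\<omega> t0 \<noteq> 0" using ex by auto
    obtain n where n: "t0 / t \<le> real n" using real_arch_simple by blast
    have "t0 \<le> real n * t" using n assms(2) by (simp add: field_simps)
    then have "\<omega> t0 \<le> \<omega> (real n * t)" using mo t0 assms(2)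
      by (intro mono_onD[OF mo]) auto
    with ind[of n] nn[OF t0(1)] t0(2) show False by auto
  qed
qed

lemma omega_lip:
  assumes "modulus_of_continuity \<omega>" "s \<ge> 0" "t \<ge> 0"
  shows "\<bar>\<omega> s - \<omega> t\<bar> \<le> \<omega> \<bar>s - t\<bar>"
proof -
  from assms(1) have mo: "mono_on {0..} \<omega>"
    and sa: "\<And>s t. s \<ge> 0 \<Longrightarrow> t \<ge> 0 \<Longrightarrow> \<omega> (s + t) \<le> \<omega> s + \<omega> t"
    unfolding modulus_of_continuity_def by auto
  have key: "\<bar>\<omega> a - \<omega> b\<bar> \<le> \<omega> (b - a)" if "0 \<le> a" "a \<le> b" for a b
  proof -
    have "\<omega> a \<le> \<omega> b" using that by (intro mono_onD[OF mo]) auto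
    moreover have "\<omega> b \<le> \<omega> a + \<omega> (b - a)" using sa[of a "b - a"] that by simp
    ultimately show ?thesis by simp
  qed
  show ?thesis
  proof (cases "s \<le> t")
    case True then show ?thesis using key[of s t] assms by simp
  next
    case False then show ?thesis using key[of t s] assms by (simp add: abs_minus_commute)
  qed
qed

lemma omega_mono:
  assumes "modulus_of_continuity \<omega>" "0 \<le> s" "s \<le> t"
  shows "\<omega> s \<le> \<omega> t"
proof -
  have mo: "mono_on {0..} \<omega>" using assms(1) unfolding modulus_of_continuity_def by blast
  show ?thesis by (rule mono_onD[OF mo]) (use assms in auto)
qed

lemma omega_nn:
  assumes "modulus_of_continuity \<omega>" "0 \<le> s"
  shows "0 \<le> \<omega> s"
  using assms unfolding modulus_of_continuity_def by auto

lemma omega_zero: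
  assumes "modulus_of_continuity \<omega>"
  shows "\<omega> 0 = 0"
  using assms unfolding modulus_of_continuity_def by auto

lemma omega_meas:
  assumes "modulus_of_continuity \<omega>"
  shows "(\<lambda>u::'a::{metric_space,zero}. \<omega> (dist u 0)) \<in> borel_measurable borel"
proof -
  define g where "g t = \<omega> (max t 0)" for t
  have "mono g" unfolding g_def mono_def
    by (auto intro!: omega_mono[OF assms])
  then have gm: "g \<in> borel_measurable borel" by (rule borel_measurable_mono)
  have dm: "(\<lambda>u::'a. dist u 0) \<in> borel_measurable borel"
    by (intro borel_measurable_continuous_onI continuous_intros)
  have "(\<lambda>u::'a. g (dist u 0)) \<in> borel_measurable borel"
    using measurable_compose[OF dm gm] by (simp add: o_def)
  moreover have "(\<lambda>u::'a. g (dist u 0)) = (\<lambda>u. \<omega> (dist u 0))"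
    by (auto simp: g_def max_def)
  ultimately show ?thesis by simp
qed

lemma arith_aux: "(m::real) > 0 \<Longrightarrow> a = 1 / m * I + (a * m - I) / m"
  by (simp add: field_simps)

lemma combine: "(sn::real) = a \<Longrightarrow> Hn = 1 \<Longrightarrow> J = I \<Longrightarrow> mm = m \<Longrightarrow> L = a * m - I \<Longrightarrow> m > 0 \<Longrightarrow>
   sn = Hn / mm * J + L / mm"
  using arith_aux[of m a I] by simp

theorem corollary1:
  fixes M :: "'a::{metric_space,comm_monoid_add} measure"
    and \<omega> :: "real \<Rightarrow> real" and f :: "'a \<Rightarrow> real" and h :: real
  assumes "standing_setting M"
    and "modulus_of_continuity \<omega>"
    and "h > 0"
    and "in_H_omega \<omega> f"
    and "integrable M f"
  shows "(bdd_above (range (\<lambda>x. \<bar>f x\<bar>)) \<and>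
         sup_norm f \<le> H_omega_norm \<omega> f / measure M (ball 0 h) * (LINT u:ball 0 h|M. \<omega> (dist u 0))
                      + L1_norm M f / measure M (ball 0 h)) \<and>
         (let fe = (\<lambda>x. max (\<omega> h - \<omega> (dist x 0)) 0) in
           in_H_omega \<omega> fe \<and> integrable M fe \<and>
           sup_norm fe = H_omega_norm \<omega> fe / measure M (ball 0 h) * (LINT u:ball 0 h|M. \<omega> (dist u 0))
                         + L1_norm M fe / measure M (ball 0 h))"
proof -
  note SS = assms(1)[unfolded standing_setting_def]
  note c1 = SS[THEN conjunct1]
  note c2 = SS[THEN conjunct2, THEN conjunct1]
  note c3 = SS[THEN conjunct2, THEN conjunct2, THEN conjunct1]
  note c4 = SS[THEN conjunct2, THEN conjunct2, THEN conjunct2, THEN conjunct1]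
  note c5 = SS[THEN conjunct2, THEN conjunct2, THEN conjunct2, THEN conjunct2, THEN conjunct1]
  have sets_eq: "sets M = sets borel" by (rule c1)
  have transl: "set_integrable M (ball 0 h) (\<lambda>u. g (x + u)) \<and>
      (LINT u:ball 0 h|M. g (x + u)) = (LINT u:((\<lambda>v. x + v) ` ball 0 h)|M. g u)"
    if "\<forall>y r. set_integrable M (ball y r) g" for g :: "'a \<Rightarrow> real" and x
    using c3[rule_format, OF assms(3) that[rule_format]] .
  have dadd: "\<And>x y::'a. dist (x + y) x \<le> dist y 0" using c4 by blast
  have c5': "0 < emeasure M (ball 0 h) \<and> emeasure M (ball 0 h) < \<infinity> \<and> ball (0::'a) h \<noteq> {0}"
    using c5[rule_format, OF assms(3)] .
  have ballh: "0 < emeasure M (ball 0 h)" "emeasure M (ball 0 h) < \<infinity>" "ball (0::'a) h \<noteq> {0}"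
    using c5' by auto
  have tsets: "\<And>Q x. Q \<in> sets M \<Longrightarrow> (\<lambda>u. x + u) ` Q \<in> sets M" using c2 by blast
  define B where "B = ball (0::'a) h"
  define m where "m = measure M B"
  have Bsets: "B \<in> sets M" using sets_eq by (simp add: B_def)
  have emB: "emeasure M B = ennreal m"
    unfolding m_def using ballh(2) by (intro emeasure_eq_ennreal_measure) (auto simp: B_def)
  have mpos: "m > 0" using ballh(1) emB by (simp add: B_def)
  have meas_borel: "\<And>g. g \<in> borel_measurable borel \<Longrightarrow> g \<in> borel_measurable M"
    by (simp add: measurable_cong_sets[OF sets_eq refl])
  define w where "w = (\<lambda>u::'a. \<omega> (dist u 0))"
  have wmeas: "w \<in> borel_measurable M" using meas_borel omega_meas[OF assms(2)] w_def by simp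
  have w_nn: "\<And>u. 0 \<le> w u" unfolding w_def by (rule omega_nn[OF assms(2)]) simp
  have wB: "\<And>u. u \<in> B \<Longrightarrow> w u \<le> \<omega> h"
    unfolding w_def B_def by (rule omega_mono[OF assms(2)]) (auto simp: dist_commute)
  have wh: "\<And>u. u \<notin> B \<Longrightarrow> \<omega> h \<le> w u"
    unfolding w_def B_def by (rule omega_mono[OF assms(2)]) (use assms(3) in \<open>auto simp: dist_commute\<close>)
  have constint: "\<And>c. set_integrable M B (\<lambda>_. c::real)"
    unfolding set_integrable_def using Bsets ballh
    by (intro integrable_scaleR_left) (auto simp: B_def)
  have wint: "set_integrable M B w"
  proof (rule set_integrable_bound[OF constint[of "\<omega> h"]])
    show "set_borel_measurable M B w" unfolding set_borel_measurable_def
      by (intro borel_measurable_scaleR borel_measurable_indicator Bsets wmeas)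
    show "AE x in M. x \<in> B \<longrightarrow> norm (w x) \<le> norm (\<omega> h)"
      using w_nn wB by (intro AE_I2) force
  qed
  define I where "I = (LINT u:B|M. w u)"
  have I_eq: "(LINT u:ball 0 h|M. \<omega> (dist u 0)) = I" by (simp add: I_def B_def w_def)
  have m_eq: "measure M (ball 0 h) = m" by (simp add: m_def B_def)
  have "0 \<in> B" using assms(3) by (simp add: B_def)
  then obtain p where p: "p \<in> B" "p \<noteq> 0" using ballh(3) unfolding B_def by blast
  have pw: "w p > 0" unfolding w_def using p by (intro omega_pos[OF assms(2)]) simp
  have ne: "{(x, y). x \<noteq> (y::'a)} \<noteq> {}" using p by blast
  define H where "H = H_omega_norm \<omega> f"
  have Hbdd: "bdd_above (H_omega_quot \<omega> f ` {(x, y). x \<noteq> y})"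
    using assms(4) unfolding in_H_omega_def .
  have Hq: "\<And>x y. x \<noteq> y \<Longrightarrow> H_omega_quot \<omega> f (x, y) \<le> H"
    unfolding H_def H_omega_norm_def by (rule cSUP_upper[OF _ Hbdd]) simp
  have H_nn: "0 \<le> H"
  proof -
    have "0 \<le> H_omega_quot \<omega> f (p, 0)" unfolding H_omega_quot_def
      using omega_nn[OF assms(2)] by (simp add: divide_nonneg_nonneg)
    with Hq[OF p(2)] show ?thesis by linarith
  qed
  have Hlip: "\<bar>f x - f y\<bar> \<le> H * \<omega> (dist x y)" for x y
  proof (cases "x = y")
    case True then show ?thesis using H_nn omega_zero[OF assms(2)] by simp
  next
    case False
    then have pos: "\<omega> (dist x y) > 0" by (intro omega_pos[OF assms(2)]) simp
    from Hq[OF False] have "\<bar>f x - f y\<bar> / \<omega> (dist x y) \<le> H" by (simp add: H_omega_quot_def)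
    then show ?thesis using pos by (simp add: pos_divide_le_eq)
  qed
  have pt: "\<bar>f x\<bar> \<le> \<bar>f (x + u)\<bar> + H * w u" for x u
  proof -
    have "\<omega> (dist x (x + u)) \<le> w u" unfolding w_def
      using dadd[of x u] by (intro omega_mono[OF assms(2)]) (auto simp: dist_commute)
    then have "H * \<omega> (dist x (x + u)) \<le> H * w u" using H_nn by (rule mult_left_mono)
    with Hlip[of x "x + u"] show ?thesis by linarith
  qed
  have fint: "integrable M (\<lambda>x. \<bar>f x\<bar>)" using assms(5) by (rule integrable_abs)
  have fball: "\<forall>y r. set_integrable M (ball y r) (\<lambda>x. \<bar>f x\<bar>)"
    unfolding set_integrable_def
    by (intro allI integrable_mult_indicator fint) (simp add: sets_eq)
  have bound: "\<bar>f x\<bar> \<le> (H * I + L1_norm M f) / m" for x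
  proof -
    from transl[OF fball, of x] have i1: "set_integrable M B (\<lambda>u. \<bar>f (x + u)\<bar>)"
      and i2: "(LINT u:B|M. \<bar>f (x + u)\<bar>) = (LINT u:((\<lambda>v. x + v) ` B)|M. \<bar>f u\<bar>)"
      by (auto simp: B_def)
    have i3: "(LINT u:((\<lambda>v. x + v) ` B)|M. \<bar>f u\<bar>) \<le> L1_norm M f"
      unfolding set_lebesgue_integral_def L1_norm_def
      by (rule integral_mono[OF integrable_mult_indicator[OF tsets[OF Bsets] fint] fint])
         (auto simp: indicator_def)
    have "m * \<bar>f x\<bar> = (LINT u:B|M. \<bar>f x\<bar>)"
      using set_integral_const[OF Bsets, of "\<bar>f x\<bar>"] ballh(2) by (simp add: m_def B_def)
    also have "\<dots> \<le> (LINT u:B|M. \<bar>f (x + u)\<bar> + H * w u)"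
      using i1 wint constint pt by (intro set_integral_mono) auto
    also have "\<dots> = (LINT u:B|M. \<bar>f (x + u)\<bar>) + H * I"
      using i1 wint by (simp add: I_def)
    also have "\<dots> \<le> L1_norm M f + H * I" using i2 i3 by simp
    finally show ?thesis using mpos by (simp add: pos_le_divide_eq algebra_simps)
  qed
  have part1: "bdd_above (range (\<lambda>x. \<bar>f x\<bar>)) \<and>
         sup_norm f \<le> H_omega_norm \<omega> f / measure M (ball 0 h) * (LINT u:ball 0 h|M. \<omega> (dist u 0))
                      + L1_norm M f / measure M (ball 0 h)"
  proof
    show "bdd_above (range (\<lambda>x. \<bar>f x\<bar>))" using bound by (intro bdd_aboveI2) 
    have "sup_norm f \<le> (H * I + L1_norm M f) / m"
      unfolding sup_norm_def using bound by (intro cSUP_least) auto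
    then show "sup_norm f \<le> H_omega_norm \<omega> f / measure M (ball 0 h) * (LINT u:ball 0 h|M. \<omega> (dist u 0))
                      + L1_norm M f / measure M (ball 0 h)"
      by (simp add: I_eq m_eq H_def add_divide_distrib)
  qed
  define fe where "fe = (\<lambda>x::'a. max (\<omega> h - \<omega> (dist x 0)) 0)"
  have fe_w: "fe x = max (\<omega> h - w x) 0" for x by (simp add: fe_def w_def)
  have fe_lip: "\<bar>fe x - fe y\<bar> \<le> \<omega> (dist x y)" for x y
  proof -
    have "\<bar>fe x - fe y\<bar> \<le> \<bar>\<omega> (dist x 0) - \<omega> (dist y 0)\<bar>"
      unfolding fe_def by (simp add: max_def abs_if split: if_splits)
    also have "\<dots> \<le> \<omega> \<bar>dist x 0 - dist y 0\<bar>" by (rule omega_lip[OF assms(2)]) auto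
    also have "\<dots> \<le> \<omega> (dist x y)"
    proof (rule omega_mono[OF assms(2)])
      show "\<bar>dist x 0 - dist y 0\<bar> \<le> dist x y"
        using dist_triangle[of x 0 y] dist_triangle[of y 0 x] by (simp add: dist_commute abs_le_iff)
    qed simp
    finally show ?thesis .
  qed
  have qle: "H_omega_quot \<omega> fe (x, y) \<le> 1" if "x \<noteq> y" for x y
  proof -
    have pos: "\<omega> (dist x y) > 0" using that by (intro omega_pos[OF assms(2)]) simp
    show ?thesis unfolding H_omega_quot_def using fe_lip[of x y] pos by simp
  qed
  have feH: "in_H_omega \<omega> fe" unfolding in_H_omega_def
    by (rule bdd_aboveI2[where M=1]) (use qle in auto)
  have qp: "H_omega_quot \<omega> fe (p, 0) = 1"
  proof -
    have "fe p = \<omega> h - w p" using wB[OF p(1)] by (simp add: fe_w)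
    moreover have "fe 0 = \<omega> h"
      using omega_zero[OF assms(2)] omega_nn[OF assms(2), of h] assms(3) by (simp add: fe_def)
    ultimately show ?thesis using pw by (simp add: H_omega_quot_def w_def)
  qed
  have Hfe: "H_omega_norm \<omega> fe = 1"
  proof (rule antisym)
    show "H_omega_norm \<omega> fe \<le> 1" unfolding H_omega_norm_def
      using ne qle by (intro cSUP_least) auto
    have "H_omega_quot \<omega> fe (p, 0) \<le> H_omega_norm \<omega> fe" unfolding H_omega_norm_def
      using feH p(2) unfolding in_H_omega_def by (intro cSUP_upper) auto
    then show "1 \<le> H_omega_norm \<omega> fe" using qp by simp
  qed
  have fe_ind: "fe x = indicator B x *\<^sub>R (\<omega> h - w x)" for x
    using wB[of x] wh[of x] by (cases "x \<in> B") (auto simp: fe_w)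
  have fe_eq: "fe = (\<lambda>x. indicator B x *\<^sub>R (\<omega> h - w x))" using fe_ind by auto
  have sdiff: "set_integrable M B (\<lambda>x. \<omega> h - w x)" using constint wint by (rule set_integral_diff)
  have feint: "integrable M fe" using sdiff unfolding fe_eq set_integrable_def .
  have fe_nn: "\<And>x. 0 \<le> fe x" by (simp add: fe_def)
  have L1fe: "L1_norm M fe = \<omega> h * m - I"
  proof -
    have "L1_norm M fe = integral\<^sup>L M fe" unfolding L1_norm_def using fe_nn by simp
    also have "\<dots> = (LINT x:B|M. \<omega> h - w x)" unfolding fe_eq set_lebesgue_integral_def ..
    also have "\<dots> = (LINT x:B|M. \<omega> h) - I" using constint wint by (simp add: I_def set_integral_diff)
    also have "(LINT x:B|M. \<omega> h) = m * \<omega> h"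
      using set_integral_const[OF Bsets, of "\<omega> h"] ballh(2) by (simp add: m_def B_def)
    finally show ?thesis by simp
  qed
  have supfe: "sup_norm fe = \<omega> h"
  proof -
    have "fe 0 = \<omega> h"
      using omega_zero[OF assms(2)] omega_nn[OF assms(2), of h] assms(3) by (simp add: fe_def)
    moreover have le: "\<bar>fe x\<bar> \<le> \<omega> h" for x
      using w_nn[of x] omega_nn[OF assms(2), of h] assms(3) by (simp add: fe_w)
    moreover have "bdd_above (range (\<lambda>x. \<bar>fe x\<bar>))" using le by (intro bdd_aboveI2)
    ultimately have "(SUP x. \<bar>fe x\<bar>) = \<omega> h"
      by (intro antisym cSUP_least cSUP_upper2[where x=0]) auto
    then show ?thesis by (simp add: sup_norm_def)
  qed
  have eq: "sup_norm fe = H_omega_norm \<omega> fe / measure M (ball 0 h) * (LINT u:ball 0 h|M. \<omega> (dist u 0))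
                         + L1_norm M fe / measure M (ball 0 h)"
    by (rule combine[OF supfe Hfe I_eq m_eq L1fe mpos])
  show ?thesis using part1 feH feint eq by (simp only: Let_def fe_def)
qed

end
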